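(* Let $I$ be an $\mathfrak m$-primary ideal of $R$ and let $r>0$ be such that $\mathfrak m^r\subset I$. Then for every integer $m\ge r$, $$\dim_{\mathbf k}(R/I)=\dim_{\mathbf k}(A^{(m)}/I^{(m)}).$$
   Context: $\mathbf{k}$ is algebraically closed; $X\subset\mathbb{A}^N$ is an affine variety over $\mathbf k$ (possibly reducible) whose irreducible components all have dimension $n$, containing the origin $o$; $R=\mathcal O_{X,o}$ with maximal ideal $\mathfrak m$. $A^{(m)}\subset R$ is the set of elements of $R$ which are restrictions to $X$ of polynomials in $\mathbf k[x_1,\ldots,x_N]$ of degree $\le m$, and $I^{(m)}=A^{(m)}\cap I$. *)

theory Defs
  imports "HOL-Algebra.Ideal_Product" "HOL-Library.Extended_Nat"
begin

text \<open>Points of affine N-space over k are functions 'n => 'k with 'n a finite index type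
  (N = CARD('n)). Polynomial functions are represented by their coefficient families.\<close>

definition alg_closed_field :: "'k::field itself \<Rightarrow> bool" where
  "alg_closed_field _ \<longleftrightarrow>
     (\<forall>n>0. \<forall>c :: nat \<Rightarrow> 'k. \<exists>x. x ^ n + (\<Sum>i<n. c i * x ^ i) = 0)"

definition origin :: "'n \<Rightarrow> 'k::zero" where
  "origin = (\<lambda>_. 0)"

definition poly_le :: "nat \<Rightarrow> (('n::finite \<Rightarrow> 'k::field) \<Rightarrow> 'k) set" where
  "poly_le m = {f. \<exists>c :: ('n \<Rightarrow> nat) \<Rightarrow> 'k.
      f = (\<lambda>x. \<Sum>\<alpha>\<in>{\<alpha>. (\<Sum>i\<in>UNIV. \<alpha> i) \<le> m}. c \<alpha> * (\<Prod>i\<in>UNIV. x i ^ \<alpha> i))}"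

definition polyfuns :: "(('n::finite \<Rightarrow> 'k::field) \<Rightarrow> 'k) set" where
  "polyfuns = (\<Union>m. poly_le m)"

definition zariski_closed :: "('n::finite \<Rightarrow> 'k::field) set \<Rightarrow> bool" where
  "zariski_closed S \<longleftrightarrow> (\<exists>P \<subseteq> polyfuns. S = {x. \<forall>f\<in>P. f x = 0})"

definition irreducible_closed :: "('n::finite \<Rightarrow> 'k::field) set \<Rightarrow> bool" where
  "irreducible_closed Y \<longleftrightarrow> zariski_closed Y \<and> Y \<noteq> {} \<and>
     (\<forall>Z1 Z2. zariski_closed Z1 \<longrightarrow> zariski_closed Z2 \<longrightarrow> Y \<subseteq> Z1 \<union> Z2 \<longrightarrow>
        Y \<subseteq> Z1 \<or> Y \<subseteq> Z2)"

definition irreducible_component ::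
    "('n::finite \<Rightarrow> 'k::field) set \<Rightarrow> ('n \<Rightarrow> 'k) set \<Rightarrow> bool" where
  "irreducible_component X Y \<longleftrightarrow> Y \<subseteq> X \<and> irreducible_closed Y \<and>
     (\<forall>Z. irreducible_closed Z \<longrightarrow> Y \<subseteq> Z \<longrightarrow> Z \<subseteq> X \<longrightarrow> Z = Y)"

definition has_chain :: "('n::finite \<Rightarrow> 'k::field) set \<Rightarrow> nat \<Rightarrow> bool" where
  "has_chain Y n \<longleftrightarrow> (\<exists>Z :: nat \<Rightarrow> ('n \<Rightarrow> 'k) set.
     (\<forall>i\<le>n. irreducible_closed (Z i)) \<and> (\<forall>i<n. Z i \<subset> Z (Suc i)) \<and> Z n \<subseteq> Y)"

definition has_dim :: "('n::finite \<Rightarrow> 'k::field) set \<Rightarrow> nat \<Rightarrow> bool" where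
  "has_dim Y n \<longleftrightarrow> has_chain Y n \<and> \<not> has_chain Y (Suc n)"

definition affine_variety :: "('n::finite \<Rightarrow> 'k::field) set \<Rightarrow> bool" where
  "affine_variety X \<longleftrightarrow> zariski_closed X \<and> X \<noteq> {}"

definition pure_dim :: "('n::finite \<Rightarrow> 'k::field) set \<Rightarrow> nat \<Rightarrow> bool" where
  "pure_dim X n \<longleftrightarrow> (\<forall>Y. irreducible_component X Y \<longrightarrow> has_dim Y n)"

type_synonym ('n, 'k) frac = "(('n \<Rightarrow> 'k) \<Rightarrow> 'k) \<times> (('n \<Rightarrow> 'k) \<Rightarrow> 'k)"

definition frac_dom :: "('n::finite, 'k::field) frac set" where
  "frac_dom = {(f, g). f \<in> polyfuns \<and> g \<in> polyfuns \<and> g origin \<noteq> 0}"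

text \<open>Equality in the localization of k[X] at the maximal ideal of o.\<close>
definition frac_rel :: "('n::finite \<Rightarrow> 'k::field) set \<Rightarrow> ('n, 'k) frac \<Rightarrow> ('n, 'k) frac \<Rightarrow> bool" where
  "frac_rel X p q \<longleftrightarrow> (\<exists>h\<in>polyfuns. h origin \<noteq> 0 \<and>
      (\<forall>x\<in>X. h x * (fst p x * snd q x - fst q x * snd p x) = 0))"

definition germ :: "('n::finite \<Rightarrow> 'k::field) set \<Rightarrow> ('n, 'k) frac \<Rightarrow> ('n, 'k) frac set" where
  "germ X p = {q \<in> frac_dom. frac_rel X p q}"

definition rep :: "('n, 'k) frac set \<Rightarrow> ('n, 'k) frac" where
  "rep a = (SOME p. p \<in> a)"

definition frac_add :: "('n, 'k::field) frac \<Rightarrow> ('n, 'k) frac \<Rightarrow> ('n, 'k) frac" where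
  "frac_add p q = ((\<lambda>x. fst p x * snd q x + fst q x * snd p x), (\<lambda>x. snd p x * snd q x))"

definition frac_mult :: "('n, 'k::field) frac \<Rightarrow> ('n, 'k) frac \<Rightarrow> ('n, 'k) frac" where
  "frac_mult p q = ((\<lambda>x. fst p x * fst q x), (\<lambda>x. snd p x * snd q x))"

definition const_frac :: "'k::field \<Rightarrow> ('n, 'k) frac" where
  "const_frac c = ((\<lambda>_. c), (\<lambda>_. 1))"

text \<open>R = O_{X,o} as a ring (HOL-Algebra record); elements are germs (equivalence classes).\<close>
definition local_ring :: "('n::finite \<Rightarrow> 'k::field) set \<Rightarrow> ('n, 'k) frac set ring" where
  "local_ring X = \<lparr> carrier = germ X ` frac_dom,
      mult = (\<lambda>a b. germ X (frac_mult (rep a) (rep b))),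
      one = germ X (const_frac 1),
      zero = germ X (const_frac 0),
      add = (\<lambda>a b. germ X (frac_add (rep a) (rep b))) \<rparr>"

definition scal :: "('n::finite \<Rightarrow> 'k::field) set \<Rightarrow> 'k \<Rightarrow> ('n, 'k) frac set \<Rightarrow> ('n, 'k) frac set" where
  "scal X c a = a \<otimes>\<^bsub>local_ring X\<^esub> germ X (const_frac c)"

definition max_ideal :: "('n::finite \<Rightarrow> 'k::field) set \<Rightarrow> ('n, 'k) frac set set" where
  "max_ideal X = {germ X p | p. p \<in> frac_dom \<and> fst p origin = 0}"

text \<open>A^{(m)}: restrictions to X of polynomials of degree at most m.\<close>
definition A_deg :: "('n::finite \<Rightarrow> 'k::field) set \<Rightarrow> nat \<Rightarrow> ('n, 'k) frac set set" where
  "A_deg X m = {germ X (f, (\<lambda>_. 1)) | f. f \<in> poly_le m}"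

primrec ideal_pow :: "('a, 'b) ring_scheme \<Rightarrow> 'a set \<Rightarrow> nat \<Rightarrow> 'a set" where
  "ideal_pow R I 0 = carrier R"
| "ideal_pow R I (Suc n) = ideal_prod R (ideal_pow R I n) I"

definition radical_of :: "('a, 'b) ring_scheme \<Rightarrow> 'a set \<Rightarrow> 'a set" where
  "radical_of R I = {a \<in> carrier R. \<exists>n::nat. a [^]\<^bsub>R\<^esub> n \<in> I}"

definition primary_ideal :: "('a, 'b) ring_scheme \<Rightarrow> 'a set \<Rightarrow> bool" where
  "primary_ideal R I \<longleftrightarrow> ideal I R \<and> I \<noteq> carrier R \<and>
     (\<forall>a\<in>carrier R. \<forall>b\<in>carrier R. a \<otimes>\<^bsub>R\<^esub> b \<in> I \<longrightarrow> a \<in> I \<or> (\<exists>n::nat. b [^]\<^bsub>R\<^esub> n \<in> I))"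

definition primary_to :: "('a, 'b) ring_scheme \<Rightarrow> 'a set \<Rightarrow> 'a set \<Rightarrow> bool" where
  "primary_to R P I \<longleftrightarrow> primary_ideal R I \<and> radical_of R I = P"

text \<open>Dimension over k of the quotient V/W of k-subspaces W \<subseteq> V of R (scalar action sc):
  the least cardinality of a finite subset of V spanning V modulo W; infinity if none.\<close>
definition quot_dim :: "('a, 'b) ring_scheme \<Rightarrow> ('k \<Rightarrow> 'a \<Rightarrow> 'a) \<Rightarrow> 'a set \<Rightarrow> 'a set \<Rightarrow> enat" where
  "quot_dim R sc V W =
    (let S = {n. \<exists>B. B \<subseteq> V \<and> finite B \<and> card B = n \<and>
               (\<forall>v\<in>V. \<exists>c. v \<ominus>\<^bsub>R\<^esub> (\<Oplus>\<^bsub>R\<^esub>b\<in>B. sc (c b) b) \<in> W)}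
     in if S = {} then \<infinity> else enat (Least (\<lambda>n. n \<in> S)))"

end

theory Submission
  imports Defs
begin


definition mon :: "('n::finite \<Rightarrow> nat) \<Rightarrow> ('n \<Rightarrow> 'k::field) \<Rightarrow> 'k" where
  "mon \<alpha> x = (\<Prod>i\<in>UNIV. x i ^ \<alpha> i)"

definition deg :: "('n::finite \<Rightarrow> nat) \<Rightarrow> nat" where
  "deg \<alpha> = (\<Sum>i\<in>UNIV. \<alpha> i)"

lemma finite_D: "finite {\<alpha>::'n::finite \<Rightarrow> nat. deg \<alpha> \<le> m}"
proof -
  have "{\<alpha>::'n \<Rightarrow> nat. deg \<alpha> \<le> m} \<subseteq> Pi\<^sub>E UNIV (\<lambda>_. {..m})"
  proof
    fix \<alpha> :: "'n \<Rightarrow> nat" assume "\<alpha> \<in> {\<alpha>. deg \<alpha> \<le> m}"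
    hence "\<alpha> i \<le> m" for i unfolding deg_def
      using member_le_sum[of i UNIV \<alpha>] by auto
    thus "\<alpha> \<in> Pi\<^sub>E UNIV (\<lambda>_. {..m})" by (auto simp: PiE_UNIV_domain)
  qed
  moreover have "finite (Pi\<^sub>E (UNIV::'n set) (\<lambda>_. {..m}))" by (rule finite_PiE) auto
  ultimately show ?thesis by (rule finite_subset)
qed

lemma poly_le_alt: "poly_le m = {f. \<exists>c. f = (\<lambda>x. \<Sum>\<alpha>\<in>{\<alpha>. deg \<alpha> \<le> m}. c \<alpha> * mon \<alpha> x)}"
  unfolding poly_le_def deg_def mon_def by simp

lemma poly_le_sumI:
  fixes e :: "'a \<Rightarrow> ('n::finite \<Rightarrow> nat)" and c :: "'a \<Rightarrow> 'k::field"
  assumes "finite J" "\<And>j. j \<in> J \<Longrightarrow> deg (e j) \<le> m"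
  shows "(\<lambda>x. \<Sum>j\<in>J. c j * mon (e j) x) \<in> poly_le m"
proof -
  define c' where "c' \<alpha> = (\<Sum>j\<in>{j\<in>J. e j = \<alpha>}. c j)" for \<alpha>
  have "(\<Sum>j\<in>J. c j * mon (e j) x) = (\<Sum>\<alpha>\<in>{\<alpha>. deg \<alpha> \<le> m}. c' \<alpha> * mon \<alpha> x)" for x :: "'n \<Rightarrow> 'k"
  proof -
    have "(\<Sum>\<alpha>\<in>{\<alpha>. deg \<alpha> \<le> m}. c' \<alpha> * mon \<alpha> x)
        = (\<Sum>\<alpha>\<in>{\<alpha>. deg \<alpha> \<le> m}. (\<Sum>j\<in>{j\<in>J. e j = \<alpha>}. c j * mon (e j) x))"
      unfolding c'_def sum_distrib_right by (intro sum.cong refl) auto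
    also have "\<dots> = (\<Sum>j\<in>J. c j * mon (e j) x)"
      by (rule sum.group) (use assms finite_D in auto)
    finally show ?thesis by simp
  qed
  thus ?thesis unfolding poly_le_alt by auto
qed

lemma poly_le_mono: "a \<le> b \<Longrightarrow> poly_le a \<subseteq> (poly_le b :: (('n::finite \<Rightarrow> 'k::field) \<Rightarrow> 'k) set)"
proof
  fix f :: "('n \<Rightarrow> 'k) \<Rightarrow> 'k" assume "a \<le> b" "f \<in> poly_le a"
  then obtain c where f: "f = (\<lambda>x. \<Sum>\<alpha>\<in>{\<alpha>. deg \<alpha> \<le> a}. c \<alpha> * mon \<alpha> x)" unfolding poly_le_alt by auto
  show "f \<in> poly_le b" unfolding f
    by (rule poly_le_sumI[where e = "\<lambda>\<alpha>. \<alpha>"]) (use finite_D \<open>a \<le> b\<close> in auto)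
qed

lemma poly_le_add:
  assumes "f \<in> poly_le m" "g \<in> poly_le m"
  shows "(\<lambda>x. f x + g x) \<in> poly_le m"
proof -
  obtain c d where "f = (\<lambda>x. \<Sum>\<alpha>\<in>{\<alpha>. deg \<alpha> \<le> m}. c \<alpha> * mon \<alpha> x)"
     "g = (\<lambda>x. \<Sum>\<alpha>\<in>{\<alpha>. deg \<alpha> \<le> m}. d \<alpha> * mon \<alpha> x)" using assms unfolding poly_le_alt by auto
  hence "(\<lambda>x. f x + g x) = (\<lambda>x. \<Sum>\<alpha>\<in>{\<alpha>. deg \<alpha> \<le> m}. (c \<alpha> + d \<alpha>) * mon \<alpha> x)"
    by (auto simp: sum.distrib distrib_right)
  thus ?thesis unfolding poly_le_alt mem_Collect_eq by (intro exI[of _ "\<lambda>\<alpha>. c \<alpha> + d \<alpha>"])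
qed

lemma mon_add: "mon (\<lambda>i. \<alpha> i + \<beta> i) x = mon \<alpha> x * mon \<beta> x"
  unfolding mon_def by (simp add: power_add prod.distrib)

lemma deg_add: "deg (\<lambda>i. \<alpha> i + \<beta> i) = deg \<alpha> + deg \<beta>"
  unfolding deg_def by (simp add: sum.distrib)

lemma poly_le_mult:
  assumes "f \<in> poly_le a" "g \<in> poly_le b"
  shows "(\<lambda>x. f x * g x) \<in> poly_le (a + b)"
proof -
  obtain c d where fg: "f = (\<lambda>x. \<Sum>\<alpha>\<in>{\<alpha>. deg \<alpha> \<le> a}. c \<alpha> * mon \<alpha> x)"
     "g = (\<lambda>x. \<Sum>\<alpha>\<in>{\<alpha>. deg \<alpha> \<le> b}. d \<alpha> * mon \<alpha> x)" using assms unfolding poly_le_alt by auto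
  have "(\<lambda>x. f x * g x) = (\<lambda>x. \<Sum>p\<in>{\<alpha>. deg \<alpha> \<le> a} \<times> {\<alpha>. deg \<alpha> \<le> b}.
          (c (fst p) * d (snd p)) * mon (\<lambda>i. fst p i + snd p i) x)"
    unfolding fg sum_product sum.cartesian_product mon_add
    by (auto intro!: sum.cong simp: mult_ac)
  also have "\<dots> \<in> poly_le (a + b)"
    by (rule poly_le_sumI) (auto simp: finite_D deg_add)
  finally show ?thesis .
qed

lemma poly_le_const: "(\<lambda>_. a) \<in> (poly_le 0 :: (('n::finite \<Rightarrow> 'k::field) \<Rightarrow> 'k) set)"
proof -
  have "(\<lambda>x::'n\<Rightarrow>'k. \<Sum>j\<in>{0::nat}. a * mon (\<lambda>_. 0::nat) x) \<in> poly_le 0"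
    by (rule poly_le_sumI) (auto simp: deg_def)
  thus ?thesis by (simp add: mon_def)
qed

lemma poly_le_coord: "(\<lambda>x. x i) \<in> (poly_le 1 :: (('n::finite \<Rightarrow> 'k::field) \<Rightarrow> 'k) set)"
proof -
  have "(\<lambda>x::'n\<Rightarrow>'k. \<Sum>j\<in>{0::nat}. 1 * mon (\<lambda>j. if j = i then 1::nat else 0) x) \<in> poly_le 1"
    by (rule poly_le_sumI) (auto simp: deg_def)
  moreover have "mon (\<lambda>j. if j = i then 1::nat else 0) x = x i" for x :: "'n \<Rightarrow> 'k"
  proof -
    have "mon (\<lambda>j. if j = i then 1::nat else 0) x = (\<Prod>j\<in>UNIV. if j = i then x j else 1)"
      unfolding mon_def by (intro prod.cong) auto
    thus ?thesis by simp
  qed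
  ultimately show ?thesis by simp
qed

lemma polyfuns_const: "(\<lambda>_. a) \<in> polyfuns"
  unfolding polyfuns_def using poly_le_const by blast

lemma polyfuns_coord: "(\<lambda>x. x i) \<in> polyfuns"
  unfolding polyfuns_def using poly_le_coord by blast

lemma polyfuns_add: "f \<in> polyfuns \<Longrightarrow> g \<in> polyfuns \<Longrightarrow> (\<lambda>x. f x + g x) \<in> polyfuns"
proof -
  assume "f \<in> polyfuns" "g \<in> polyfuns"
  then obtain a b where "f \<in> poly_le a" "g \<in> poly_le b" unfolding polyfuns_def by auto
  hence "f \<in> poly_le (max a b)" "g \<in> poly_le (max a b)"
    using poly_le_mono[of a "max a b"] poly_le_mono[of b "max a b"] by auto
  thus ?thesis unfolding polyfuns_def using poly_le_add by blast
qed

lemma polyfuns_mult: "f \<in> polyfuns \<Longrightarrow> g \<in> polyfuns \<Longrightarrow> (\<lambda>x. f x * g x) \<in> polyfuns"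
  unfolding polyfuns_def using poly_le_mult by blast



lemma frac_dom_iff: "(f, g) \<in> frac_dom \<longleftrightarrow> f \<in> polyfuns \<and> g \<in> polyfuns \<and> g origin \<noteq> 0"
  unfolding frac_dom_def by simp

lemma frac_dom_D: "p \<in> frac_dom \<Longrightarrow> fst p \<in> polyfuns \<and> snd p \<in> polyfuns \<and> snd p origin \<noteq> 0"
  by (cases p) (simp add: frac_dom_iff)

lemma polyfuns_neg: "f \<in> polyfuns \<Longrightarrow> (\<lambda>x. - f x) \<in> polyfuns"
  using polyfuns_mult[OF polyfuns_const[of "-1"]] by simp

lemma frac_relI:
  "(\<And>x. x \<in> X \<Longrightarrow> fst p x * snd q x = fst q x * snd p x) \<Longrightarrow> frac_rel X p q"
  unfolding frac_rel_def
  by (intro bexI[of _ "\<lambda>_. 1"]) (auto simp: origin_def polyfuns_const)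

lemma frac_relI2:
  assumes "h \<in> polyfuns" "h origin \<noteq> 0"
    "\<And>x. x \<in> X \<Longrightarrow> h x \<noteq> 0 \<Longrightarrow> fst p x * snd q x = fst q x * snd p x"
  shows "frac_rel X p q"
  unfolding frac_rel_def using assms by (intro bexI[of _ h]) auto

lemma frac_relE:
  assumes "frac_rel X p q"
  obtains h where "h \<in> polyfuns" "h origin \<noteq> 0"
    "\<And>x. x \<in> X \<Longrightarrow> h x \<noteq> 0 \<Longrightarrow> fst p x * snd q x = fst q x * snd p x"
  using assms unfolding frac_rel_def by (metis mult_eq_0_iff right_minus_eq)

lemma frac_rel_refl: "frac_rel X p p"
  by (rule frac_relI) simp

lemma frac_rel_sym: "frac_rel X p q \<Longrightarrow> frac_rel X q p"
  by (erule frac_relE, rule frac_relI2) (auto simp: mult_ac)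

lemma frac_rel_trans:
  assumes pq: "frac_rel X p q" and qs: "frac_rel X q s" and q: "q \<in> frac_dom"
  shows "frac_rel X p s"
proof -
  obtain h1 where h1: "h1 \<in> polyfuns" "h1 origin \<noteq> 0"
    "\<And>x. x \<in> X \<Longrightarrow> h1 x \<noteq> 0 \<Longrightarrow> fst p x * snd q x = fst q x * snd p x" by (rule frac_relE[OF pq]) blast
  obtain h2 where h2: "h2 \<in> polyfuns" "h2 origin \<noteq> 0"
    "\<And>x. x \<in> X \<Longrightarrow> h2 x \<noteq> 0 \<Longrightarrow> fst q x * snd s x = fst s x * snd q x" by (rule frac_relE[OF qs]) blast
  show ?thesis
  proof (rule frac_relI2[where h = "\<lambda>x. h1 x * h2 x * snd q x"])
    show "(\<lambda>x. h1 x * h2 x * snd q x) \<in> polyfuns"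
      using h1 h2 frac_dom_D[OF q] by (intro polyfuns_mult) auto
    show "h1 origin * h2 origin * snd q origin \<noteq> 0" using h1 h2 frac_dom_D[OF q] by auto
    fix x assume x: "x \<in> X" "h1 x * h2 x * snd q x \<noteq> 0"
    hence e1: "fst p x * snd q x = fst q x * snd p x" and e2: "fst q x * snd s x = fst s x * snd q x"
      using h1 h2 by auto
    have "snd q x * (fst p x * snd s x) = (fst p x * snd q x) * snd s x" by (simp add: mult_ac)
    also have "\<dots> = snd p x * (fst q x * snd s x)" using e1 by (simp add: mult_ac)
    also have "\<dots> = snd q x * (fst s x * snd p x)" using e2 by (simp add: mult_ac)
    finally have "snd q x * (fst p x * snd s x) = snd q x * (fst s x * snd p x)" .
    thus "fst p x * snd s x = fst s x * snd p x" using x by simp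
  qed
qed

lemma germ_self: "p \<in> frac_dom \<Longrightarrow> p \<in> germ X p"
  unfolding germ_def by (simp add: frac_rel_refl)

lemma germ_eq: "p \<in> frac_dom \<Longrightarrow> q \<in> frac_dom \<Longrightarrow> germ X p = germ X q \<longleftrightarrow> frac_rel X p q"
proof
  assume "p \<in> frac_dom" "q \<in> frac_dom" "germ X p = germ X q"
  thus "frac_rel X p q" using germ_self[of q X] unfolding germ_def by auto
next
  assume pq: "p \<in> frac_dom" "q \<in> frac_dom" "frac_rel X p q"
  show "germ X p = germ X q" unfolding germ_def
    using pq frac_rel_trans frac_rel_sym by blast
qed

lemma rep_germ: assumes "p \<in> frac_dom"
  shows "rep (germ X p) \<in> frac_dom" "frac_rel X p (rep (germ X p))"
proof -
  have "rep (germ X p) \<in> germ X p" unfolding rep_def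
    using germ_self[OF assms] by (rule someI)
  thus "rep (germ X p) \<in> frac_dom" "frac_rel X p (rep (germ X p))" unfolding germ_def by auto
qed

lemma frac_add_dom: "p \<in> frac_dom \<Longrightarrow> q \<in> frac_dom \<Longrightarrow> frac_add p q \<in> frac_dom"
  unfolding frac_add_def using frac_dom_D[of p] frac_dom_D[of q]
  by (simp add: frac_dom_iff polyfuns_add polyfuns_mult)

lemma frac_mult_dom: "p \<in> frac_dom \<Longrightarrow> q \<in> frac_dom \<Longrightarrow> frac_mult p q \<in> frac_dom"
  unfolding frac_mult_def using frac_dom_D[of p] frac_dom_D[of q]
  by (simp add: frac_dom_iff polyfuns_mult)

lemma const_frac_dom: "const_frac c \<in> frac_dom"
  unfolding const_frac_def by (simp add: frac_dom_iff polyfuns_const)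

lemma alg_add:
  fixes a :: "'a::comm_ring"
  assumes "a * b' = a' * b" "c * d' = c' * d"
  shows "(a*d + c*b)*(b'*d') = (a'*d' + c'*b')*(b*d)"
proof -
  have "(a*d + c*b)*(b'*d') = (a*b')*(d*d') + (c*d')*(b*b')" by (simp add: algebra_simps)
  also have "\<dots> = (a'*b)*(d*d') + (c'*d)*(b*b')" using assms by simp
  also have "\<dots> = (a'*d' + c'*b')*(b*d)" by (simp add: algebra_simps)
  finally show ?thesis .
qed
lemma alg_mult:
  fixes a :: "'a::comm_ring"
  assumes "a * b' = a' * b" "c * d' = c' * d"
  shows "a*c*(b'*d') = a'*c'*(b*d)"
proof -
  have "a*c*(b'*d') = (a*b')*(c*d')" by (simp add: algebra_simps)
  also have "\<dots> = (a'*b)*(c'*d)" using assms by simp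
  also have "\<dots> = a'*c'*(b*d)" by (simp add: algebra_simps)
  finally show ?thesis .
qed

lemma frac_rel_cong2:
  assumes pq: "frac_rel X p p'" and qs: "frac_rel X q q'"
    and H: "\<And>x. fst p x * snd p' x = fst p' x * snd p x \<Longrightarrow> fst q x * snd q' x = fst q' x * snd q x
         \<Longrightarrow> fst (F p q) x * snd (F p' q') x = fst (F p' q') x * snd (F p q) x"
  shows "frac_rel X (F p q) (F p' q')"
proof -
  obtain h1 where h1: "h1 \<in> polyfuns" "h1 origin \<noteq> 0"
    "\<And>x. x \<in> X \<Longrightarrow> h1 x \<noteq> 0 \<Longrightarrow> fst p x * snd p' x = fst p' x * snd p x" by (rule frac_relE[OF pq]) blast
  obtain h2 where h2: "h2 \<in> polyfuns" "h2 origin \<noteq> 0"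
    "\<And>x. x \<in> X \<Longrightarrow> h2 x \<noteq> 0 \<Longrightarrow> fst q x * snd q' x = fst q' x * snd q x" by (rule frac_relE[OF qs]) blast
  show ?thesis
    by (rule frac_relI2[where h = "\<lambda>x. h1 x * h2 x"]) (use h1 h2 H in \<open>auto intro: polyfuns_mult\<close>)
qed

lemma frac_add_cong: "frac_rel X p p' \<Longrightarrow> frac_rel X q q' \<Longrightarrow> frac_rel X (frac_add p q) (frac_add p' q')"
  by (rule frac_rel_cong2[where F = frac_add], assumption, assumption) (unfold frac_add_def fst_conv snd_conv, rule alg_add)

lemma frac_mult_cong: "frac_rel X p p' \<Longrightarrow> frac_rel X q q' \<Longrightarrow> frac_rel X (frac_mult p q) (frac_mult p' q')"
  by (rule frac_rel_cong2[where F = frac_mult], assumption, assumption) (unfold frac_mult_def fst_conv snd_conv, rule alg_mult)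

lemma R_carrier: "carrier (local_ring X) = germ X ` frac_dom"
  by (simp add: local_ring_def)

lemma R_zero: "\<zero>\<^bsub>local_ring X\<^esub> = germ X (const_frac 0)"
  by (simp add: local_ring_def)

lemma R_one: "\<one>\<^bsub>local_ring X\<^esub> = germ X (const_frac 1)"
  by (simp add: local_ring_def)

lemma R_add: "p \<in> frac_dom \<Longrightarrow> q \<in> frac_dom \<Longrightarrow>
   germ X p \<oplus>\<^bsub>local_ring X\<^esub> germ X q = germ X (frac_add p q)"
proof -
  assume pq: "p \<in> frac_dom" "q \<in> frac_dom"
  have "germ X (frac_add (rep (germ X p)) (rep (germ X q))) = germ X (frac_add p q)"
    using pq by (subst germ_eq) (auto intro!: frac_add_dom rep_germ frac_rel_sym[OF frac_add_cong] )
  thus ?thesis by (simp add: local_ring_def)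
qed

lemma R_mult: "p \<in> frac_dom \<Longrightarrow> q \<in> frac_dom \<Longrightarrow>
   germ X p \<otimes>\<^bsub>local_ring X\<^esub> germ X q = germ X (frac_mult p q)"
proof -
  assume pq: "p \<in> frac_dom" "q \<in> frac_dom"
  have "germ X (frac_mult (rep (germ X p)) (rep (germ X q))) = germ X (frac_mult p q)"
    using pq by (subst germ_eq) (auto intro!: frac_mult_dom rep_germ frac_rel_sym[OF frac_mult_cong] )
  thus ?thesis by (simp add: local_ring_def)
qed

lemma R_carrierE: "a \<in> carrier (local_ring X) \<Longrightarrow> (\<And>p. p \<in> frac_dom \<Longrightarrow> a = germ X p \<Longrightarrow> P) \<Longrightarrow> P"
  by (auto simp: R_carrier)

lemma germ_in: "p \<in> frac_dom \<Longrightarrow> germ X p \<in> carrier (local_ring X)"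
  by (simp add: R_carrier)

definition frac_neg :: "('n, 'k::field) frac \<Rightarrow> ('n, 'k) frac" where
  "frac_neg p = ((\<lambda>x. - fst p x), snd p)"

lemma frac_neg_dom: "p \<in> frac_dom \<Longrightarrow> frac_neg p \<in> frac_dom"
  unfolding frac_neg_def using frac_dom_D[of p] by (simp add: frac_dom_iff polyfuns_neg)

lemma germ_eqI: "p \<in> frac_dom \<Longrightarrow> q \<in> frac_dom \<Longrightarrow>
  (\<And>x. fst p x * snd q x = fst q x * snd p x) \<Longrightarrow> germ X p = germ X q"
  by (simp add: germ_eq frac_relI)

lemmas dom_simps = frac_add_dom frac_mult_dom const_frac_dom frac_neg_dom germ_in R_add R_mult

lemma AX_add_assoc: "p \<in> frac_dom \<Longrightarrow> q \<in> frac_dom \<Longrightarrow> s \<in> frac_dom \<Longrightarrow>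
  germ X (frac_add (frac_add p q) s) = germ X (frac_add p (frac_add q s))"
  by (rule germ_eqI) (simp_all add: frac_add_dom, simp add: frac_add_def algebra_simps)

lemma AX_add_comm: "p \<in> frac_dom \<Longrightarrow> q \<in> frac_dom \<Longrightarrow>
  germ X (frac_add p q) = germ X (frac_add q p)"
  by (rule germ_eqI) (simp_all add: frac_add_dom, simp add: frac_add_def algebra_simps)

lemma AX_add_zero: "p \<in> frac_dom \<Longrightarrow> germ X (frac_add (const_frac 0) p) = germ X p"
  by (rule germ_eqI) (simp_all add: frac_add_dom const_frac_dom, simp add: frac_add_def const_frac_def)

lemma AX_add_neg: "p \<in> frac_dom \<Longrightarrow> germ X (frac_add (frac_neg p) p) = germ X (const_frac 0)"
  by (rule germ_eqI) (simp_all add: frac_add_dom const_frac_dom frac_neg_dom, simp add: frac_add_def const_frac_def frac_neg_def)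

lemma AX_mult_assoc: "p \<in> frac_dom \<Longrightarrow> q \<in> frac_dom \<Longrightarrow> s \<in> frac_dom \<Longrightarrow>
  germ X (frac_mult (frac_mult p q) s) = germ X (frac_mult p (frac_mult q s))"
  by (rule germ_eqI) (simp_all add: frac_mult_dom, simp add: frac_mult_def algebra_simps)

lemma AX_mult_comm: "p \<in> frac_dom \<Longrightarrow> q \<in> frac_dom \<Longrightarrow>
  germ X (frac_mult p q) = germ X (frac_mult q p)"
  by (rule germ_eqI) (simp_all add: frac_mult_dom, simp add: frac_mult_def algebra_simps)

lemma AX_mult_one: "p \<in> frac_dom \<Longrightarrow> germ X (frac_mult (const_frac 1) p) = germ X p"
  by (rule germ_eqI) (simp_all add: frac_mult_dom const_frac_dom, simp add: frac_mult_def const_frac_def)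

lemma AX_distr: "p \<in> frac_dom \<Longrightarrow> q \<in> frac_dom \<Longrightarrow> s \<in> frac_dom \<Longrightarrow>
  germ X (frac_mult (frac_add p q) s) = germ X (frac_add (frac_mult p s) (frac_mult q s))"
  by (rule germ_eqI) (simp_all add: frac_mult_dom frac_add_dom, simp add: frac_mult_def frac_add_def algebra_simps)

lemma cring_R: "cring (local_ring X)"
proof (rule cringI)
  show "abelian_group (local_ring X)"
  proof (rule abelian_groupI)
    fix a b assume "a \<in> carrier (local_ring X)" "b \<in> carrier (local_ring X)"
    thus "a \<oplus>\<^bsub>local_ring X\<^esub> b \<in> carrier (local_ring X)"
      by (auto elim!: R_carrierE simp: dom_simps)
  next
    show "\<zero>\<^bsub>local_ring X\<^esub> \<in> carrier (local_ring X)" by (simp add: R_zero dom_simps)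
  next
    fix a b c assume "a \<in> carrier (local_ring X)" "b \<in> carrier (local_ring X)" "c \<in> carrier (local_ring X)"
    thus "a \<oplus>\<^bsub>local_ring X\<^esub> b \<oplus>\<^bsub>local_ring X\<^esub> c = a \<oplus>\<^bsub>local_ring X\<^esub> (b \<oplus>\<^bsub>local_ring X\<^esub> c)"
      by (elim R_carrierE) (simp add: dom_simps AX_add_assoc)
  next
    fix a b assume "a \<in> carrier (local_ring X)" "b \<in> carrier (local_ring X)"
    thus "a \<oplus>\<^bsub>local_ring X\<^esub> b = b \<oplus>\<^bsub>local_ring X\<^esub> a"
      by (elim R_carrierE) (simp add: dom_simps AX_add_comm)
  next
    fix a assume "a \<in> carrier (local_ring X)"
    thus "\<zero>\<^bsub>local_ring X\<^esub> \<oplus>\<^bsub>local_ring X\<^esub> a = a"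
      by (elim R_carrierE) (simp add: dom_simps R_zero AX_add_zero)
  next
    fix a assume "a \<in> carrier (local_ring X)"
    then obtain p where p: "p \<in> frac_dom" "a = germ X p" by (rule R_carrierE)
    show "\<exists>y\<in>carrier (local_ring X). y \<oplus>\<^bsub>local_ring X\<^esub> a = \<zero>\<^bsub>local_ring X\<^esub>"
      by (rule bexI[of _ "germ X (frac_neg p)"]) (use p in \<open>simp_all add: dom_simps R_zero AX_add_neg\<close>)
  qed
next
  show "comm_monoid (local_ring X)"
  proof (rule comm_monoidI)
    fix a b assume "a \<in> carrier (local_ring X)" "b \<in> carrier (local_ring X)"
    thus "a \<otimes>\<^bsub>local_ring X\<^esub> b \<in> carrier (local_ring X)"
      by (auto elim!: R_carrierE simp: dom_simps)
  next
    show "\<one>\<^bsub>local_ring X\<^esub> \<in> carrier (local_ring X)" by (simp add: R_one dom_simps)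
  next
    fix a b c assume "a \<in> carrier (local_ring X)" "b \<in> carrier (local_ring X)" "c \<in> carrier (local_ring X)"
    thus "a \<otimes>\<^bsub>local_ring X\<^esub> b \<otimes>\<^bsub>local_ring X\<^esub> c = a \<otimes>\<^bsub>local_ring X\<^esub> (b \<otimes>\<^bsub>local_ring X\<^esub> c)"
      by (elim R_carrierE) (simp add: dom_simps AX_mult_assoc)
  next
    fix a assume "a \<in> carrier (local_ring X)"
    thus "\<one>\<^bsub>local_ring X\<^esub> \<otimes>\<^bsub>local_ring X\<^esub> a = a"
      by (elim R_carrierE) (simp add: dom_simps R_one AX_mult_one)
  next
    fix a b assume "a \<in> carrier (local_ring X)" "b \<in> carrier (local_ring X)"
    thus "a \<otimes>\<^bsub>local_ring X\<^esub> b = b \<otimes>\<^bsub>local_ring X\<^esub> a"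
      by (elim R_carrierE) (simp add: dom_simps AX_mult_comm)
  qed
next
  fix a b c assume "a \<in> carrier (local_ring X)" "b \<in> carrier (local_ring X)" "c \<in> carrier (local_ring X)"
  thus "(a \<oplus>\<^bsub>local_ring X\<^esub> b) \<otimes>\<^bsub>local_ring X\<^esub> c = a \<otimes>\<^bsub>local_ring X\<^esub> c \<oplus>\<^bsub>local_ring X\<^esub> b \<otimes>\<^bsub>local_ring X\<^esub> c"
    by (elim R_carrierE) (simp add: dom_simps AX_distr)
qed



lemma poly_le_polyfuns: "f \<in> poly_le m \<Longrightarrow> f \<in> polyfuns"
  unfolding polyfuns_def by blast

lemma polyfuns_sum: "finite S \<Longrightarrow> (\<And>i. i \<in> S \<Longrightarrow> F i \<in> polyfuns) \<Longrightarrow> (\<lambda>x. \<Sum>i\<in>S. F i x) \<in> polyfuns"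
  by (induction S rule: finite_induct) (auto simp: polyfuns_const polyfuns_add)

lemma polyfuns_power: "u \<in> polyfuns \<Longrightarrow> (\<lambda>x. u x ^ k) \<in> polyfuns"
  by (induction k) (auto simp: polyfuns_const polyfuns_mult)

definition unitv :: "'n \<Rightarrow> 'n \<Rightarrow> nat" where "unitv i = (\<lambda>j. if j = i then 1 else 0)"

lemma mon_unitv: "mon (unitv i) x = x i"
proof -
  have "mon (unitv i) x = (\<Prod>j\<in>UNIV. if j = i then x j else 1)"
    unfolding mon_def unitv_def by (intro prod.cong) auto
  thus ?thesis by simp
qed

lemma deg_unitv: "deg (unitv (i::'n::finite)) = 1"
  unfolding deg_def unitv_def by simp

lemma polyfuns_mon: "mon \<alpha> \<in> polyfuns"
proof -
  have "(\<lambda>x. \<Sum>j\<in>{0::nat}. 1 * mon \<alpha> x) \<in> poly_le (deg \<alpha>)"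
    by (rule poly_le_sumI) auto
  thus ?thesis unfolding polyfuns_def by (auto simp: fun_eq_iff)
qed

context fixes X :: "('n::finite \<Rightarrow> 'k::field) set"
begin

interpretation R: cring "local_ring X" by (rule cring_R)

lemma R_neg: "p \<in> frac_dom \<Longrightarrow> \<ominus>\<^bsub>local_ring X\<^esub> germ X p = germ X (frac_neg p)"
  by (rule R.minus_equality) (simp_all add: dom_simps AX_add_neg R_zero)

lemma R_minus: "p \<in> frac_dom \<Longrightarrow> q \<in> frac_dom \<Longrightarrow>
   germ X p \<ominus>\<^bsub>local_ring X\<^esub> germ X q = germ X (frac_add p (frac_neg q))"
  by (simp add: R.minus_eq R_neg dom_simps)

lemma R_scal: "p \<in> frac_dom \<Longrightarrow> scal X c (germ X p) = germ X (frac_mult p (const_frac c))"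
  by (simp add: scal_def dom_simps)

abbreviation "Mpow \<equiv> ideal_pow (local_ring X) (max_ideal X)"

lemma Mpow_step:
  assumes f: "f \<in> polyfuns" and g: "g \<in> polyfuns" "g origin \<noteq> 0"
    and in_k: "germ X (f, g) \<in> Mpow k" and b: "b \<in> polyfuns" "b origin = 0"
  shows "germ X (\<lambda>x. f x * b x, g) \<in> Mpow (Suc k)"
proof -
  have d1: "(f, g) \<in> frac_dom" "(b, \<lambda>_. 1) \<in> frac_dom"
    using f g b by (simp_all add: frac_dom_iff polyfuns_const)
  have "germ X (\<lambda>x. f x * b x, g) = germ X (f, g) \<otimes>\<^bsub>local_ring X\<^esub> germ X (b, \<lambda>_. 1)"
    using d1 f g b by (simp add: R_mult, intro germ_eqI)
       (simp_all add: frac_dom_iff polyfuns_mult frac_mult_dom frac_mult_def)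
  moreover have "germ X (b, \<lambda>_. 1) \<in> max_ideal X"
    unfolding max_ideal_def using d1 b by auto
  ultimately show ?thesis using in_k by (simp add: ideal_prod.prod)
qed

lemma Mpow_pow:
  assumes u: "u \<in> polyfuns" "u origin = 0" and g: "g \<in> polyfuns" "g origin \<noteq> 0"
  shows "h \<in> polyfuns \<Longrightarrow> germ X (\<lambda>x. h x * u x ^ k, g) \<in> Mpow k"
proof (induction k arbitrary: h)
  case 0
  note h0 = this
  show ?case
    apply (simp only: ideal_pow.simps)
    apply (rule germ_in)
    using h0 g apply (simp add: frac_dom_iff)
    done
next
  case (Suc k)
  have hk: "(\<lambda>x. h x * u x ^ k) \<in> polyfuns"
    by (rule polyfuns_mult[OF Suc.prems polyfuns_power[OF u(1)]])
  have "germ X (\<lambda>x. (h x * u x ^ k) * u x, g) \<in> Mpow (Suc k)"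
    by (rule Mpow_step[OF hk g Suc.IH[OF Suc.prems] u])
  thus ?case by (simp add: mult_ac)
qed

lemma Mpow_mon:
  assumes g: "g \<in> polyfuns" "g origin \<noteq> 0"
  shows "deg \<alpha> \<ge> k \<Longrightarrow> h \<in> polyfuns \<Longrightarrow> germ X (\<lambda>x. h x * mon \<alpha> x, g) \<in> Mpow k"
proof (induction k arbitrary: \<alpha> h)
  case 0
  hence hm: "(\<lambda>x. h x * mon \<alpha> x) \<in> polyfuns"
    by (intro polyfuns_mult polyfuns_mon) auto
  show ?case
    apply (simp only: ideal_pow.simps)
    apply (rule germ_in)
    using hm g apply (simp add: frac_dom_iff)
    done
next
  case (Suc k)
  hence "deg \<alpha> \<noteq> 0" by linarith
  then obtain i where i: "\<alpha> i > 0" unfolding deg_def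
    by (auto simp: sum_eq_0_iff)
  define \<beta> where "\<beta> = \<alpha>(i := \<alpha> i - 1)"
  have ab: "\<alpha> = (\<lambda>j. \<beta> j + unitv i j)" using i unfolding \<beta>_def unitv_def by auto
  have "deg \<alpha> = deg \<beta> + 1" using deg_add[of \<beta> "unitv i"] ab deg_unitv[of i] by simp
  hence db: "deg \<beta> \<ge> k" using Suc by simp
  have hk: "(\<lambda>x. h x * mon \<beta> x) \<in> polyfuns"
    by (rule polyfuns_mult[OF Suc.prems(2) polyfuns_mon])
  have "germ X (\<lambda>x. (h x * mon \<beta> x) * x i, g) \<in> Mpow (Suc k)"
    by (rule Mpow_step[OF hk g Suc.IH[OF db Suc.prems(2)] polyfuns_coord]) (simp add: origin_def)
  moreover have "(h x * mon \<beta> x) * x i = h x * mon \<alpha> x" for x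
    by (subst ab, simp add: mon_add mon_unitv mult_ac)
  ultimately show ?case by simp
qed

end



context fixes X :: "('n::finite \<Rightarrow> 'k::field) set"
begin

interpretation R: cring "local_ring X" by (rule cring_R)

lemma germ_add1: "f \<in> polyfuns \<Longrightarrow> g \<in> polyfuns \<Longrightarrow>
  germ X (\<lambda>x. f x + g x, \<lambda>_. 1) = germ X (f, \<lambda>_. 1) \<oplus>\<^bsub>local_ring X\<^esub> germ X (g, \<lambda>_. 1)"
  apply (subst R_add)
    apply (simp add: frac_dom_iff polyfuns_const)
   apply (simp add: frac_dom_iff polyfuns_const)
  apply (rule germ_eqI)
    apply (simp add: frac_dom_iff polyfuns_const polyfuns_add)
   apply (rule frac_add_dom; simp add: frac_dom_iff polyfuns_const)
  apply (simp add: frac_add_def)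
  done

lemma polyfuns_cmon: "(\<lambda>x. \<Sum>\<alpha>\<in>S. c \<alpha> * mon \<alpha> x) \<in> polyfuns" if "finite S"
  using that by (rule polyfuns_sum) (rule polyfuns_mult[OF polyfuns_const polyfuns_mon])

lemma high_in_I:
  assumes I: "ideal I (local_ring X)" and MI: "Mpow X r \<subseteq> I"
  shows "finite S \<Longrightarrow> (\<forall>\<alpha>\<in>S. deg \<alpha> \<ge> r) \<Longrightarrow> germ X (\<lambda>x. \<Sum>\<alpha>\<in>S. c \<alpha> * mon \<alpha> x, \<lambda>_. 1) \<in> I"
proof (induction S rule: finite_induct)
  case empty
  interpret I: ideal I "local_ring X" by (rule I)
  have "germ X (\<lambda>x. \<Sum>\<alpha>\<in>{}. c \<alpha> * mon \<alpha> x, \<lambda>_. 1) = \<zero>\<^bsub>local_ring X\<^esub>"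
    by (simp add: R_zero const_frac_def)
  thus ?case by simp
next
  case (insert a S)
  interpret I: ideal I "local_ring X" by (rule I)
  have "germ X (\<lambda>x. c a * mon a x, \<lambda>_. 1) \<in> Mpow X r"
    using Mpow_mon[where X=X and g="\<lambda>_. 1" and \<alpha>=a and k=r and h="\<lambda>_. c a"] insert.prems by (simp add: polyfuns_const origin_def)
  hence 1: "germ X (\<lambda>x. c a * mon a x, \<lambda>_. 1) \<in> I" using MI by blast
  have 2: "germ X (\<lambda>x. \<Sum>\<alpha>\<in>S. c \<alpha> * mon \<alpha> x, \<lambda>_. 1) \<in> I" using insert by simp
  have "germ X (\<lambda>x. \<Sum>\<alpha>\<in>insert a S. c \<alpha> * mon \<alpha> x, \<lambda>_. 1)
      = germ X (\<lambda>x. c a * mon a x + (\<Sum>\<alpha>\<in>S. c \<alpha> * mon \<alpha> x), \<lambda>_. 1)"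
    using insert by simp
  also have "\<dots> = germ X (\<lambda>x. c a * mon a x, \<lambda>_. 1) \<oplus>\<^bsub>local_ring X\<^esub> germ X (\<lambda>x. \<Sum>\<alpha>\<in>S. c \<alpha> * mon \<alpha> x, \<lambda>_. 1)"
    by (rule germ_add1[OF polyfuns_mult[OF polyfuns_const polyfuns_mon] polyfuns_cmon[OF insert(1)]])
  finally show ?case using 1 2 by simp
qed

lemma approx:
  assumes I: "ideal I (local_ring X)" and MI: "Mpow X r \<subseteq> I" and rm: "r \<le> m"
    and a: "a \<in> carrier (local_ring X)"
  shows "\<exists>T\<in>poly_le m. a \<ominus>\<^bsub>local_ring X\<^esub> germ X (T, \<lambda>_. 1) \<in> I"
proof -
  interpret I: ideal I "local_ring X" by (rule I)
  obtain p where p: "p \<in> frac_dom" "a = germ X p" using a by (rule R_carrierE)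
  obtain f g where fg: "p = (f, g)" by (cases p)
  have fpol: "f \<in> polyfuns" and gpol: "g \<in> polyfuns" and c0: "g origin \<noteq> 0"
    using p fg by (simp_all add: frac_dom_iff)
  define c where "c = g origin"
  have c: "c \<noteq> 0" using c0 c_def by simp
  define u where "u = (\<lambda>x. 1 + (- inverse c) * g x)"
  have upol: "u \<in> polyfuns" unfolding u_def
    by (rule polyfuns_add[OF polyfuns_const polyfuns_mult[OF polyfuns_const gpol]])
  have u0: "u origin = 0" unfolding u_def c_def using c0 by simp
  have gx: "g x = c * (1 - u x)" for x unfolding u_def using c by (simp add: field_simps)
  define P where "P = (\<lambda>x. (inverse c * f x) * (\<Sum>i<r. u x ^ i))"
  have Ppol: "P \<in> polyfuns" unfolding P_def
    by (rule polyfuns_mult[OF polyfuns_mult[OF polyfuns_const fpol] polyfuns_sum])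
       (auto intro: polyfuns_power[OF upol])
  have key: "f x - P x * g x = f x * u x ^ r" for x
  proof -
    have "P x * g x = f x * ((1 - u x) * (\<Sum>i<r. u x ^ i))"
      unfolding P_def gx using c by (simp add: field_simps)
    also have "\<dots> = f x * (1 - u x ^ r)" by (simp only: one_diff_power_eq)
    finally show ?thesis by (simp add: algebra_simps)
  qed
  obtain N where "P \<in> poly_le N" using Ppol unfolding polyfuns_def by auto
  then obtain cP where Pc: "P = (\<lambda>x. \<Sum>\<alpha>\<in>{\<alpha>. deg \<alpha> \<le> N}. cP \<alpha> * mon \<alpha> x)"
    unfolding poly_le_alt by auto
  define L where "L = {\<alpha>::'n \<Rightarrow> nat. deg \<alpha> \<le> N} \<inter> {\<alpha>. deg \<alpha> < r}"
  define H where "H = {\<alpha>::'n \<Rightarrow> nat. deg \<alpha> \<le> N} - {\<alpha>. deg \<alpha> < r}"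
  define T where "T = (\<lambda>x. \<Sum>\<alpha>\<in>L. cP \<alpha> * mon \<alpha> x)"
  define Hf where "Hf = (\<lambda>x. \<Sum>\<alpha>\<in>H. cP \<alpha> * mon \<alpha> x)"
  have finL: "finite L" and finH: "finite H" unfolding L_def H_def using finite_D by auto
  have Tm: "T \<in> poly_le m" unfolding T_def
    by (rule poly_le_sumI[where e = "\<lambda>\<alpha>. \<alpha>"]) (use finL rm in \<open>auto simp: L_def\<close>)
  have Tpol: "T \<in> polyfuns" by (rule poly_le_polyfuns[OF Tm])
  have Hpol: "Hf \<in> polyfuns" unfolding Hf_def by (rule polyfuns_cmon[OF finH])
  have PTH: "P x = T x + Hf x" for x
    unfolding Pc T_def Hf_def L_def H_def by (rule sum.Int_Diff) (rule finite_D)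
  have Hin: "germ X (Hf, \<lambda>_. 1) \<in> I" unfolding Hf_def
    by (rule high_in_I[OF I MI finH]) (auto simp: H_def)
  have "germ X (\<lambda>x. f x * u x ^ r, g) \<in> Mpow X r"
    by (rule Mpow_pow[OF upol u0 gpol c0 fpol])
  hence Uin: "germ X (\<lambda>x. f x * u x ^ r, g) \<in> I" using MI by blast
  have d1: "(\<lambda>x. f x * u x ^ r, g) \<in> frac_dom"
    using fpol gpol c0 by (simp add: frac_dom_iff polyfuns_mult polyfuns_power upol)
  have d2: "(Hf, \<lambda>_. 1) \<in> frac_dom" "(T, \<lambda>_. 1) \<in> frac_dom"
    using Hpol Tpol by (simp_all add: frac_dom_iff polyfuns_const)
  have "a \<ominus>\<^bsub>local_ring X\<^esub> germ X (T, \<lambda>_. 1) = germ X (frac_add (f, g) (frac_neg (T, \<lambda>_. 1)))"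
    using p fg d2 by (simp add: R_minus)
  also have "\<dots> = germ X (frac_add (\<lambda>x. f x * u x ^ r, g) (Hf, \<lambda>_. 1))"
  proof (rule germ_eqI)
    show "frac_add (f, g) (frac_neg (T, \<lambda>_. 1)) \<in> frac_dom"
      using p fg d2 by (simp add: frac_add_dom frac_neg_dom)
    show "frac_add (\<lambda>x. f x * u x ^ r, g) (Hf, \<lambda>_. 1) \<in> frac_dom"
      using d1 d2 by (simp add: frac_add_dom)
    fix x
    have "f x - T x * g x = f x * u x ^ r + Hf x * g x"
      using key[of x] PTH[of x] by (simp add: algebra_simps)
    thus "fst (frac_add (f, g) (frac_neg (T, \<lambda>_. 1))) x * snd (frac_add (\<lambda>x. f x * u x ^ r, g) (Hf, \<lambda>_. 1)) x =
          fst (frac_add (\<lambda>x. f x * u x ^ r, g) (Hf, \<lambda>_. 1)) x * snd (frac_add (f, g) (frac_neg (T, \<lambda>_. 1))) x"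
      by (simp add: frac_add_def frac_neg_def)
  qed
  also have "\<dots> = germ X (\<lambda>x. f x * u x ^ r, g) \<oplus>\<^bsub>local_ring X\<^esub> germ X (Hf, \<lambda>_. 1)"
    using d1 d2 by (simp add: R_add)
  finally have "a \<ominus>\<^bsub>local_ring X\<^esub> germ X (T, \<lambda>_. 1) \<in> I" using Uin Hin by simp
  thus ?thesis using Tm by blast
qed

end



lemma (in cring) minus_split:
  "x \<in> carrier R \<Longrightarrow> y \<in> carrier R \<Longrightarrow> z \<in> carrier R \<Longrightarrow> x \<ominus> z = (x \<ominus> y) \<oplus> (y \<ominus> z)"
  by algebra

lemma (in cring) minus_split2:
  "v \<in> carrier R \<Longrightarrow> y \<in> carrier R \<Longrightarrow> z \<in> carrier R \<Longrightarrow> v \<ominus> z = (v \<ominus> (y \<oplus> z)) \<oplus> y"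
  by algebra

lemma (in cring) pt_split:
  "b \<in> carrier R \<Longrightarrow> a \<in> carrier R \<Longrightarrow> k \<in> carrier R \<Longrightarrow> (b \<ominus> a) \<otimes> k \<oplus> a \<otimes> k = b \<otimes> k"
  by algebra

lemma (in abelian_group) finsum_in_set:
  assumes "finite F" "\<And>i. i \<in> F \<Longrightarrow> f i \<in> C" "\<zero> \<in> C"
    "\<And>x y. x \<in> C \<Longrightarrow> y \<in> C \<Longrightarrow> x \<oplus> y \<in> C" "C \<subseteq> carrier G"
  shows "finsum G f F \<in> C"
  using assms(1,2)
proof (induction F rule: finite_induct)
  case empty thus ?case using assms(3) by simp
next
  case (insert i F)
  have "f \<in> F \<rightarrow> carrier G" "f i \<in> carrier G" using insert assms(5) by auto
  thus ?case using insert assms(4) by (simp add: finsum_insert)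
qed

lemma (in cring) kappa_sum:
  assumes "\<And>c. \<kappa> c \<in> carrier R" "\<And>c d. \<kappa> (c + d) = \<kappa> c \<oplus> \<kappa> d" "\<kappa> 0 = \<zero>"
  shows "finite F \<Longrightarrow> \<kappa> (\<Sum>i\<in>F. c i) = (\<Oplus>i\<in>F. \<kappa> (c i))"
proof (induction F rule: finite_induct)
  case empty thus ?case using assms by simp
next
  case (insert i F)
  thus ?case using assms by (simp add: finsum_insert Pi_def)
qed

lemma (in cring) dim_eq:
  fixes \<kappa> :: "'c::comm_monoid_add \<Rightarrow> 'a"
  assumes k1: "\<And>c. \<kappa> c \<in> carrier R" and k2: "\<And>c d. \<kappa> (c + d) = \<kappa> c \<oplus> \<kappa> d" and k3: "\<kappa> 0 = \<zero>"
    and I: "ideal I R" and A: "A \<subseteq> carrier R"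
    and A0: "\<zero> \<in> A" and Aadd: "\<And>x y. x \<in> A \<Longrightarrow> y \<in> A \<Longrightarrow> x \<oplus> y \<in> A"
    and Aneg: "\<And>x. x \<in> A \<Longrightarrow> \<ominus> x \<in> A"
    and Asc: "\<And>x c. x \<in> A \<Longrightarrow> x \<otimes> \<kappa> c \<in> A"
    and appr: "\<And>a. a \<in> carrier R \<Longrightarrow> \<exists>b\<in>A. a \<ominus> b \<in> I"
  shows "quot_dim R (\<lambda>c x. x \<otimes> \<kappa> c) (carrier R) I = quot_dim R (\<lambda>c x. x \<otimes> \<kappa> c) A (A \<inter> I)"
proof -
  interpret I: ideal I R by (rule I)
  define S where "S = {n. \<exists>B. B \<subseteq> carrier R \<and> finite B \<and> card B = n \<and>
               (\<forall>v\<in>carrier R. \<exists>c. v \<ominus> (\<Oplus>b\<in>B. b \<otimes> \<kappa> (c b)) \<in> I)}"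
  define S' where "S' = {n. \<exists>B. B \<subseteq> A \<and> finite B \<and> card B = n \<and>
               (\<forall>v\<in>A. \<exists>c. v \<ominus> (\<Oplus>b\<in>B. b \<otimes> \<kappa> (c b)) \<in> A \<inter> I)}"
  have q1: "quot_dim R (\<lambda>c x. x \<otimes> \<kappa> c) (carrier R) I = (if S = {} then \<infinity> else enat (Least (\<lambda>n. n \<in> S)))"
    unfolding quot_dim_def S_def Let_def by simp
  have q2: "quot_dim R (\<lambda>c x. x \<otimes> \<kappa> c) A (A \<inter> I) = (if S' = {} then \<infinity> else enat (Least (\<lambda>n. n \<in> S')))"
    unfolding quot_dim_def S'_def Let_def by simp
  have sum_car: "(\<Oplus>b\<in>B. f b \<otimes> \<kappa> (c b)) \<in> carrier R" if "\<And>b. b \<in> B \<Longrightarrow> f b \<in> carrier R" for B f c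
    by (rule finsum_closed) (use that k1 in auto)
  have sub: "S' \<subseteq> S"
  proof
    fix n assume "n \<in> S'"
    then obtain B where B: "B \<subseteq> A" "finite B" "card B = n"
      "\<forall>v\<in>A. \<exists>c. v \<ominus> (\<Oplus>b\<in>B. b \<otimes> \<kappa> (c b)) \<in> A \<inter> I" unfolding S'_def by auto
    have "\<exists>c. v \<ominus> (\<Oplus>b\<in>B. b \<otimes> \<kappa> (c b)) \<in> I" if v: "v \<in> carrier R" for v
    proof -
      obtain b0 where b0: "b0 \<in> A" "v \<ominus> b0 \<in> I" using appr[OF v] by auto
      obtain c where c: "b0 \<ominus> (\<Oplus>b\<in>B. b \<otimes> \<kappa> (c b)) \<in> A \<inter> I" using B(4) b0(1) by auto
      have sc: "(\<Oplus>b\<in>B. b \<otimes> \<kappa> (c b)) \<in> carrier R" by (rule sum_car) (use B(1) A in auto)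
      have "v \<ominus> (\<Oplus>b\<in>B. b \<otimes> \<kappa> (c b)) = (v \<ominus> b0) \<oplus> (b0 \<ominus> (\<Oplus>b\<in>B. b \<otimes> \<kappa> (c b)))"
        by (rule minus_split) (use v b0 A sc in auto)
      also have "\<dots> \<in> I" using b0 c by simp
      finally show ?thesis by blast
    qed
    thus "n \<in> S" unfolding S_def using B A by blast
  qed
  have red: "\<exists>n'\<in>S'. n' \<le> n" if "n \<in> S" for n
  proof -
    obtain B where B: "B \<subseteq> carrier R" "finite B" "card B = n"
      "\<forall>v\<in>carrier R. \<exists>c. v \<ominus> (\<Oplus>b\<in>B. b \<otimes> \<kappa> (c b)) \<in> I" using \<open>n \<in> S\<close> unfolding S_def by auto
    define \<phi> where "\<phi> b = (SOME a. a \<in> A \<and> b \<ominus> a \<in> I)" for b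
    have \<phi>: "\<phi> b \<in> A" "b \<ominus> \<phi> b \<in> I" if "b \<in> B" for b
    proof -
      have "\<exists>a. a \<in> A \<and> b \<ominus> a \<in> I" using appr[of b] that B(1) by auto
      hence "\<phi> b \<in> A \<and> b \<ominus> \<phi> b \<in> I" unfolding \<phi>_def by (rule someI_ex)
      thus "\<phi> b \<in> A" "b \<ominus> \<phi> b \<in> I" by auto
    qed
    define B' where "B' = \<phi> ` B"
    have B': "B' \<subseteq> A" "finite B'" "card B' \<le> n"
      using \<phi> B unfolding B'_def by (auto intro: card_image_le)
    have span: "\<exists>c. v \<ominus> (\<Oplus>b\<in>B'. b \<otimes> \<kappa> (c b)) \<in> A \<inter> I" if v: "v \<in> A" for v
    proof -
      obtain c where c: "v \<ominus> (\<Oplus>b\<in>B. b \<otimes> \<kappa> (c b)) \<in> I" using B(4) v A by auto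
      define c' where "c' b' = (\<Sum>b\<in>{b\<in>B. \<phi> b = b'}. c b)" for b'
      have fib: "B = (\<Union>b'\<in>B'. {b\<in>B. \<phi> b = b'})" unfolding B'_def by auto
      have "(\<Oplus>b\<in>B. \<phi> b \<otimes> \<kappa> (c b)) = (\<Oplus>b'\<in>B'. (\<Oplus>b\<in>{b\<in>B. \<phi> b = b'}. \<phi> b \<otimes> \<kappa> (c b)))"
        apply (subst fib)
        apply (rule add.finprod_UN_disjoint)
        using B(2) B' \<phi> A k1 by (auto simp: pairwise_def disjnt_def)
      also have "\<dots> = (\<Oplus>b'\<in>B'. b' \<otimes> \<kappa> (c' b'))"
      proof (rule finsum_cong')
        show "B' = B'" ..
        show "(\<lambda>b'. b' \<otimes> \<kappa> (c' b')) \<in> B' \<rightarrow> carrier R" using B' A k1 by auto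
        fix b' assume b': "b' \<in> B'"
        have "(\<Oplus>b\<in>{b\<in>B. \<phi> b = b'}. \<phi> b \<otimes> \<kappa> (c b)) = (\<Oplus>b\<in>{b\<in>B. \<phi> b = b'}. b' \<otimes> \<kappa> (c b))"
          by (rule finsum_cong') (use b' B' A k1 in auto)
        also have "\<dots> = b' \<otimes> (\<Oplus>b\<in>{b\<in>B. \<phi> b = b'}. \<kappa> (c b))"
          by (rule finsum_rdistr[symmetric]) (use b' B' A k1 B(2) in auto)
        also have "\<dots> = b' \<otimes> \<kappa> (c' b')"
          unfolding c'_def using kappa_sum[OF k1 k2 k3, of "{b\<in>B. \<phi> b = b'}" c] B(2) by simp
        finally show "(\<Oplus>b\<in>{b\<in>B. \<phi> b = b'}. \<phi> b \<otimes> \<kappa> (c b)) = b' \<otimes> \<kappa> (c' b')" .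
      qed
      finally have Z: "(\<Oplus>b\<in>B. \<phi> b \<otimes> \<kappa> (c b)) = (\<Oplus>b'\<in>B'. b' \<otimes> \<kappa> (c' b'))" .
      have phic: "\<phi> b \<in> carrier R" if "b \<in> B" for b using \<phi>[OF that] A by auto
      have bc: "b \<in> carrier R" if "b \<in> B" for b using that B(1) by auto
      have XYZ: "(\<Oplus>b\<in>B. b \<otimes> \<kappa> (c b)) = (\<Oplus>b\<in>B. (b \<ominus> \<phi> b) \<otimes> \<kappa> (c b)) \<oplus> (\<Oplus>b\<in>B. \<phi> b \<otimes> \<kappa> (c b))"
        apply (subst finsum_addf[symmetric])
          apply (auto simp: Pi_def bc phic k1 m_closed minus_closed a_closed)[2]
        apply (rule finsum_cong')
          apply simp
         apply (auto simp: Pi_def bc phic k1 m_closed minus_closed a_closed)[1]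
        apply (rule pt_split[symmetric])
          apply (simp_all add: bc phic k1)
        done
      have Y: "(\<Oplus>b\<in>B. (b \<ominus> \<phi> b) \<otimes> \<kappa> (c b)) \<in> I"
        by (rule finsum_in_set) (use B \<phi> k1 I.a_subset in \<open>auto intro: I.I_r_closed\<close>)
      have Zin: "(\<Oplus>b\<in>B. \<phi> b \<otimes> \<kappa> (c b)) \<in> A"
        by (rule finsum_in_set) (use B \<phi> A0 Aadd Asc A in auto)
      have Zc: "(\<Oplus>b\<in>B. \<phi> b \<otimes> \<kappa> (c b)) \<in> carrier R" using Zin A by auto
      have Yc: "(\<Oplus>b\<in>B. (b \<ominus> \<phi> b) \<otimes> \<kappa> (c b)) \<in> carrier R" using Y I.a_subset by auto
      have vc: "v \<in> carrier R" using v A by auto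
      have "v \<ominus> (\<Oplus>b\<in>B. \<phi> b \<otimes> \<kappa> (c b)) = (v \<ominus> (\<Oplus>b\<in>B. b \<otimes> \<kappa> (c b))) \<oplus> (\<Oplus>b\<in>B. (b \<ominus> \<phi> b) \<otimes> \<kappa> (c b))"
        unfolding XYZ by (rule minus_split2[OF vc Yc Zc])
      also have "\<dots> \<in> I" using c Y by simp
      finally have inI: "v \<ominus> (\<Oplus>b\<in>B. \<phi> b \<otimes> \<kappa> (c b)) \<in> I" .
      have inA: "v \<ominus> (\<Oplus>b\<in>B. \<phi> b \<otimes> \<kappa> (c b)) \<in> A"
        unfolding minus_eq using Aadd[OF v Aneg[OF Zin]] .
      show ?thesis using inI inA Z by auto
    qed
    have "card B' \<in> S'" unfolding S'_def using B' span by blast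
    thus ?thesis using B' by blast
  qed
  show ?thesis
  proof (cases "S = {}")
    case True
    hence "S' = {}" using sub by auto
    thus ?thesis using True q1 q2 by simp
  next
    case False
    then obtain n0 where n0: "n0 \<in> S" by auto
    have L: "Least (\<lambda>n. n \<in> S) \<in> S" using n0 by (rule LeastI)
    obtain n' where n': "n' \<in> S'" "n' \<le> Least (\<lambda>n. n \<in> S)" using red[OF L] by auto
    have S'ne: "S' \<noteq> {}" using n' by auto
    have "Least (\<lambda>n. n \<in> S') \<le> n'" using n'(1) by (rule Least_le)
    moreover have "Least (\<lambda>n. n \<in> S) \<le> Least (\<lambda>n. n \<in> S')"
      using LeastI[of "\<lambda>n. n \<in> S'" n', OF n'(1)] sub by (intro Least_le) auto
    ultimately have "Least (\<lambda>n. n \<in> S) = Least (\<lambda>n. n \<in> S')" using n'(2) by linarith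
    thus ?thesis using False S'ne q1 q2 by simp
  qed
qed



lemma A_degI: "f \<in> poly_le m \<Longrightarrow> germ X (f, \<lambda>_. 1) \<in> A_deg X m"
  unfolding A_deg_def by blast

lemma A_degE: "x \<in> A_deg X m \<Longrightarrow> (\<And>f. f \<in> poly_le m \<Longrightarrow> x = germ X (f, \<lambda>_. 1) \<Longrightarrow> P) \<Longrightarrow> P"
  unfolding A_deg_def by blast

lemma dom1: "f \<in> poly_le m \<Longrightarrow> (f, \<lambda>_. 1) \<in> frac_dom"
  by (simp add: frac_dom_iff poly_le_polyfuns polyfuns_const)

theorem proposition2p3:
  fixes X :: "('n::finite \<Rightarrow> 'k::field) set"
    and n :: nat and I :: "('n, 'k) frac set set" and r :: nat
  assumes "alg_closed_field TYPE('k)"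
    and "affine_variety X" and "pure_dim X n" and "origin \<in> X"
    and "primary_to (local_ring X) (max_ideal X) I"
    and "r > 0" and "ideal_pow (local_ring X) (max_ideal X) r \<subseteq> I"
  shows "\<forall>m::nat. m \<ge> r \<longrightarrow>
     quot_dim (local_ring X) (scal X) (carrier (local_ring X)) I
       = quot_dim (local_ring X) (scal X) (A_deg X m) (A_deg X m \<inter> I)"
proof (intro allI impI)
  fix m :: nat assume rm: "r \<le> m"
  interpret R: cring "local_ring X" by (rule cring_R)
  have I: "ideal I (local_ring X)" using assms(5) unfolding primary_to_def primary_ideal_def by blast
  have MI: "Mpow X r \<subseteq> I" using assms(7) .
  define \<kappa> where "\<kappa> c = germ X (const_frac c)" for c :: 'k
  have scal_eq: "scal X = (\<lambda>c x. x \<otimes>\<^bsub>local_ring X\<^esub> \<kappa> c)"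
    by (simp add: fun_eq_iff scal_def \<kappa>_def)
  have pm: "poly_le 0 \<subseteq> (poly_le m :: (('n \<Rightarrow> 'k) \<Rightarrow> 'k) set)" by (rule poly_le_mono) simp
  show "quot_dim (local_ring X) (scal X) (carrier (local_ring X)) I
       = quot_dim (local_ring X) (scal X) (A_deg X m) (A_deg X m \<inter> I)"
    unfolding scal_eq
  proof (rule R.dim_eq)
    show "\<kappa> c \<in> carrier (local_ring X)" for c unfolding \<kappa>_def by (rule germ_in[OF const_frac_dom])
    show "\<kappa> (c + d) = \<kappa> c \<oplus>\<^bsub>local_ring X\<^esub> \<kappa> d" for c d
      unfolding \<kappa>_def
      by (subst R_add[OF const_frac_dom const_frac_dom], rule germ_eqI)
         (simp_all add: const_frac_dom frac_add_dom, simp add: const_frac_def frac_add_def)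
    show "\<kappa> 0 = \<zero>\<^bsub>local_ring X\<^esub>" unfolding \<kappa>_def by (simp add: R_zero)
    show "ideal I (local_ring X)" by (rule I)
    show "A_deg X m \<subseteq> carrier (local_ring X)"
      by (auto elim!: A_degE intro!: germ_in dom1)
    have "(\<lambda>_. 0) \<in> (poly_le m :: (('n \<Rightarrow> 'k) \<Rightarrow> 'k) set)" using pm poly_le_const by blast
    hence "germ X (\<lambda>_. 0, \<lambda>_. 1) \<in> A_deg X m" by (rule A_degI)
    thus "\<zero>\<^bsub>local_ring X\<^esub> \<in> A_deg X m" by (simp add: R_zero const_frac_def)
    show "x \<oplus>\<^bsub>local_ring X\<^esub> y \<in> A_deg X m" if xy: "x \<in> A_deg X m" "y \<in> A_deg X m" for x y
    proof -
      obtain f where f: "f \<in> poly_le m" "x = germ X (f, \<lambda>_. 1)" using xy(1) by (rule A_degE)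
      obtain g where g: "g \<in> poly_le m" "y = germ X (g, \<lambda>_. 1)" using xy(2) by (rule A_degE)
      have "x \<oplus>\<^bsub>local_ring X\<^esub> y = germ X (\<lambda>x. f x + g x, \<lambda>_. 1)"
        using f g germ_add1[of f g X] by (simp add: poly_le_polyfuns)
      thus ?thesis using poly_le_add[OF f(1) g(1)] by (simp add: A_degI)
    qed
    show "\<ominus>\<^bsub>local_ring X\<^esub> x \<in> A_deg X m" if xA: "x \<in> A_deg X m" for x
    proof -
      obtain f where f: "f \<in> poly_le m" "x = germ X (f, \<lambda>_. 1)" using xA by (rule A_degE)
      have "\<ominus>\<^bsub>local_ring X\<^esub> x = germ X (\<lambda>x. (-1) * f x, \<lambda>_. 1)"
        using f R_neg[OF dom1[OF f(1)], of X] by (simp add: frac_neg_def)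
      moreover have "(\<lambda>x. (-1) * f x) \<in> poly_le m"
        using poly_le_mult[OF poly_le_const[of "-1"] f(1)] by simp
      ultimately show ?thesis by (simp add: A_degI)
    qed
    show "x \<otimes>\<^bsub>local_ring X\<^esub> \<kappa> c \<in> A_deg X m" if xA: "x \<in> A_deg X m" for x c
    proof -
      obtain f where f: "f \<in> poly_le m" "x = germ X (f, \<lambda>_. 1)" using xA by (rule A_degE)
      have "x \<otimes>\<^bsub>local_ring X\<^esub> \<kappa> c = germ X (\<lambda>x. f x * c, \<lambda>_. 1)"
        using f R_mult[OF dom1[OF f(1)] const_frac_dom, of X c] by (simp add: \<kappa>_def frac_mult_def const_frac_def)
      moreover have "(\<lambda>x. f x * c) \<in> poly_le m"
        using poly_le_mult[OF f(1) poly_le_const[of c]] by simp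
      ultimately show ?thesis by (simp add: A_degI)
    qed
    show "\<exists>b\<in>A_deg X m. a \<ominus>\<^bsub>local_ring X\<^esub> b \<in> I" if "a \<in> carrier (local_ring X)" for a
      using approx[OF I MI rm that] by (auto intro: A_degI)
  qed
qed



end
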